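(* The class of line-graphs of bipartite multigraphs is closed under the following two operations: (1) deletion of a flat edge; (2) addition of a new vertex whose neighborhood is a maximal clique of the graph.
   Context: The line-graph of a multigraph $B$ has the edges of $B$ as vertices, two being adjacent iff they share an endpoint in $B$. An edge of a graph is flat if it is contained in no triangle. *)

theory Defs
  imports Main
begin

definition simple_graph :: "'a set \<Rightarrow> ('a \<Rightarrow> 'a \<Rightarrow> bool) \<Rightarrow> bool" where
  "simple_graph V adj \<longleftrightarrow> finite V \<and>
     (\<forall>u v. adj u v \<longrightarrow> u \<in> V \<and> v \<in> V \<and> u \<noteq> v \<and> adj v u)"

text \<open>Finite bipartite multigraph with parts X, Y and edge set Ed (edges are
  abstract identifiers, so parallel edges are allowed); ends e = (x, y) gives the
  endpoint x in X and the endpoint y in Y.\<close>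
definition bipartite_multigraph ::
  "'b set \<Rightarrow> 'b set \<Rightarrow> 'e set \<Rightarrow> ('e \<Rightarrow> 'b \<times> 'b) \<Rightarrow> bool" where
  "bipartite_multigraph X Y Ed ends \<longleftrightarrow> finite X \<and> finite Y \<and> finite Ed \<and>
     X \<inter> Y = {} \<and> (\<forall>e\<in>Ed. fst (ends e) \<in> X \<and> snd (ends e) \<in> Y)"

definition line_adj :: "('e \<Rightarrow> 'b \<times> 'b) \<Rightarrow> 'e \<Rightarrow> 'e \<Rightarrow> bool" where
  "line_adj ends e f \<longleftrightarrow> e \<noteq> f \<and>
     ({fst (ends e), snd (ends e)} \<inter> {fst (ends f), snd (ends f)} \<noteq> {})"

definition line_graph_of_bipartite_multigraph :: "'a set \<Rightarrow> ('a \<Rightarrow> 'a \<Rightarrow> bool) \<Rightarrow> bool" where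
  "line_graph_of_bipartite_multigraph V adj \<longleftrightarrow> simple_graph V adj \<and>
     (\<exists>(X::nat set) Y (Ed::nat set) ends \<phi>. bipartite_multigraph X Y Ed ends \<and>
        bij_betw \<phi> V Ed \<and> (\<forall>u\<in>V. \<forall>v\<in>V. adj u v \<longleftrightarrow> line_adj ends (\<phi> u) (\<phi> v)))"

definition flat_edge :: "'a set \<Rightarrow> ('a \<Rightarrow> 'a \<Rightarrow> bool) \<Rightarrow> 'a \<Rightarrow> 'a \<Rightarrow> bool" where
  "flat_edge V adj u v \<longleftrightarrow> adj u v \<and> \<not> (\<exists>w\<in>V. adj u w \<and> adj v w)"

definition delete_edge :: "('a \<Rightarrow> 'a \<Rightarrow> bool) \<Rightarrow> 'a \<Rightarrow> 'a \<Rightarrow> 'a \<Rightarrow> 'a \<Rightarrow> bool" where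
  "delete_edge adj u v = (\<lambda>x y. adj x y \<and> {x, y} \<noteq> {u, v})"

definition clique :: "'a set \<Rightarrow> ('a \<Rightarrow> 'a \<Rightarrow> bool) \<Rightarrow> 'a set \<Rightarrow> bool" where
  "clique V adj K \<longleftrightarrow> K \<subseteq> V \<and> (\<forall>x\<in>K. \<forall>y\<in>K. x \<noteq> y \<longrightarrow> adj x y)"

definition maximal_clique :: "'a set \<Rightarrow> ('a \<Rightarrow> 'a \<Rightarrow> bool) \<Rightarrow> 'a set \<Rightarrow> bool" where
  "maximal_clique V adj K \<longleftrightarrow> clique V adj K \<and> (\<forall>K'. clique V adj K' \<and> K \<subseteq> K' \<longrightarrow> K' = K)"

definition add_vertex_adj :: "('a \<Rightarrow> 'a \<Rightarrow> bool) \<Rightarrow> 'a \<Rightarrow> 'a set \<Rightarrow> 'a \<Rightarrow> 'a \<Rightarrow> bool" where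
  "add_vertex_adj adj z K = (\<lambda>x y. adj x y \<or> (x = z \<and> y \<in> K) \<or> (y = z \<and> x \<in> K))"

end

theory Submission
  imports Defs
begin

lemma pair_int: "({a, b} \<inter> {c, d} \<noteq> {}) \<longleftrightarrow> (a = c \<or> a = d \<or> b = c \<or> b = d)"
  by blast

lemma la:
  assumes "bipartite_multigraph X Y Ed ends" "p \<in> Ed" "q \<in> Ed"
  shows "line_adj ends p q \<longleftrightarrow> p \<noteq> q \<and> (fst (ends p) = fst (ends q) \<or> snd (ends p) = snd (ends q))"
proof -
  have h: "fst (ends p) \<in> X" "snd (ends p) \<in> Y" "fst (ends q) \<in> X" "snd (ends q) \<in> Y" "X \<inter> Y = {}"
    using assms unfolding bipartite_multigraph_def by simp_all
  have d1: "fst (ends p) \<noteq> snd (ends q)" using h(1,4,5) by (metis IntI empty_iff)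
  have d2: "snd (ends p) \<noteq> fst (ends q)" using h(2,3,5) by (metis IntI empty_iff)
  show ?thesis unfolding line_adj_def pair_int using d1 d2 by auto
qed

lemma fresh1: assumes "finite (S::nat set)" shows "Suc (Max S) \<notin> S"
proof
  assume h: "Suc (Max S) \<in> S"
  from Max_ge[OF assms h] have "Suc (Max S) \<le> Max S" .
  then show False by simp
qed

lemma fresh2: assumes "finite (S::nat set)" shows "Suc (Suc (Max S)) \<notin> S"
proof
  assume h: "Suc (Suc (Max S)) \<in> S"
  from Max_ge[OF assms h] have "Suc (Suc (Max S)) \<le> Max S" .
  then show False by simp
qed

lemma delete_ok:
  assumes lg: "line_graph_of_bipartite_multigraph V adj"
    and fl: "flat_edge V adj u v"
  shows "line_graph_of_bipartite_multigraph V (delete_edge adj u v)"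
proof -
  have sg: "simple_graph V adj" using lg unfolding line_graph_of_bipartite_multigraph_def by blast
  obtain X Y :: "nat set" and Ed :: "nat set" and ends \<phi> where
    bm: "bipartite_multigraph X Y Ed ends" and bij: "bij_betw \<phi> V Ed"
    and ad: "\<forall>x\<in>V. \<forall>y\<in>V. adj x y \<longleftrightarrow> line_adj ends (\<phi> x) (\<phi> y)"
    using lg unfolding line_graph_of_bipartite_multigraph_def by blast
  have uv: "adj u v" and nw: "\<not> (\<exists>w\<in>V. adj u w \<and> adj v w)" using fl unfolding flat_edge_def by auto
  have uV: "u \<in> V" "v \<in> V" "u \<noteq> v" using sg uv unfolding simple_graph_def by auto
  define e where "e = \<phi> u"
  define f where "f = \<phi> v"
  have inj: "inj_on \<phi> V" and img: "\<phi> ` V = Ed" using bij unfolding bij_betw_def by auto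
  have eEd: "e \<in> Ed" "f \<in> Ed" "e \<noteq> f" using uV inj img unfolding e_def f_def inj_on_def by auto
  have finE: "finite Ed" using bm unfolding bipartite_multigraph_def by auto
  have fin: "finite X" "finite Y" and disj: "X \<inter> Y = {}"
    and ends_in: "\<forall>g\<in>Ed. fst (ends g) \<in> X \<and> snd (ends g) \<in> Y"
    using bm unfolding bipartite_multigraph_def by auto
  define a where "a = Suc (Max (X \<union> Y))"
  define b where "b = Suc (Suc (Max (X \<union> Y)))"
  have ab: "a \<notin> X" "a \<notin> Y" "b \<notin> X" "b \<notin> Y" "a \<noteq> b"
    using fresh1[of "X \<union> Y"] fresh2[of "X \<union> Y"] fin unfolding a_def b_def by auto
  define ea where "ea = (if fst (ends e) = fst (ends f) then a else fst (ends e))"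
  define eb where "eb = (if snd (ends e) = snd (ends f) then b else snd (ends e))"
  define ends' where "ends' = ends(e := (ea, eb))"
  have bm': "bipartite_multigraph (insert a X) (insert b Y) Ed ends'"
    using finE fin disj ends_in ab eEd unfolding bipartite_multigraph_def ends'_def ea_def eb_def by auto
  have eq: "\<And>g. g \<noteq> e \<Longrightarrow> ends' g = ends g" unfolding ends'_def by auto
  have phiEd: "\<And>w. w \<in> V \<Longrightarrow> \<phi> w \<in> Ed" using img by auto
  have phie: "\<And>w. w \<in> V \<Longrightarrow> w \<noteq> u \<Longrightarrow> \<phi> w \<noteq> e"
    using inj uV unfolding e_def inj_on_def by metis
  have adjc: "\<And>x y. x \<in> V \<Longrightarrow> y \<in> V \<Longrightarrow> adj x y \<longleftrightarrow> \<phi> x \<noteq> \<phi> y \<and>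
      (fst (ends (\<phi> x)) = fst (ends (\<phi> y)) \<or> snd (ends (\<phi> x)) = snd (ends (\<phi> y)))"
    using ad la[OF bm] phiEd by blast
  have adjc': "\<And>x y. x \<in> V \<Longrightarrow> y \<in> V \<Longrightarrow> line_adj ends' (\<phi> x) (\<phi> y) \<longleftrightarrow> \<phi> x \<noteq> \<phi> y \<and>
      (fst (ends' (\<phi> x)) = fst (ends' (\<phi> y)) \<or> snd (ends' (\<phi> x)) = snd (ends' (\<phi> y)))"
    using la[OF bm'] phiEd by blast
  have key: "\<And>w. w \<in> V \<Longrightarrow> w \<noteq> v \<Longrightarrow> adj u w \<longleftrightarrow> line_adj ends' e (\<phi> w)"
  proof -
    fix w assume w: "w \<in> V" "w \<noteq> v"
    show "adj u w \<longleftrightarrow> line_adj ends' e (\<phi> w)"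
    proof (cases "w = u")
      case True
      then show ?thesis using sg uV unfolding simple_graph_def line_adj_def e_def by auto
    next
      case False
      have ne: "\<phi> w \<noteq> e" using phie w False by auto
      have nf: "\<phi> w \<noteq> f" using inj w uV unfolding f_def inj_on_def by metis
      have r: "line_adj ends' e (\<phi> w) \<longleftrightarrow> (ea = fst (ends (\<phi> w)) \<or> eb = snd (ends (\<phi> w)))"
        using adjc'[OF uV(1) w(1)] ne eq[OF ne] unfolding e_def ends'_def by auto
      have l: "adj u w \<longleftrightarrow> (fst (ends e) = fst (ends (\<phi> w)) \<or> snd (ends e) = snd (ends (\<phi> w)))"
        using adjc[OF uV(1) w(1)] ne unfolding e_def by auto
      have vw: "adj v w \<longleftrightarrow> (fst (ends f) = fst (ends (\<phi> w)) \<or> snd (ends f) = snd (ends (\<phi> w)))"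
        using adjc[OF uV(2) w(1)] nf unfolding f_def by auto
      have A: "fst (ends e) = fst (ends f) \<Longrightarrow> fst (ends e) \<noteq> fst (ends (\<phi> w))"
        using l vw nw w by auto
      have B: "snd (ends e) = snd (ends f) \<Longrightarrow> snd (ends e) \<noteq> snd (ends (\<phi> w))"
        using l vw nw w by auto
      have wi: "fst (ends (\<phi> w)) \<in> X" "snd (ends (\<phi> w)) \<in> Y" using ends_in phiEd w by auto
      show ?thesis using r l A B wi ab unfolding ea_def eb_def by auto
    qed
  qed
  have nuv: "\<not> line_adj ends' e f"
  proof -
    have fi: "fst (ends f) \<in> X" "snd (ends f) \<in> Y" using ends_in eEd by auto
    have "ea \<noteq> fst (ends f)" "eb \<noteq> snd (ends f)" using fi ab unfolding ea_def eb_def by auto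
    then show ?thesis using adjc'[OF uV(1) uV(2)] eq[of f] eEd unfolding e_def f_def ends'_def by auto
  qed
  have lsym: "\<And>p q. line_adj ends' p q = line_adj ends' q p" unfolding line_adj_def by (metis Int_commute)
  have asym: "\<And>p q. adj p q = adj q p" using sg unfolding simple_graph_def by blast
  have main: "\<forall>x\<in>V. \<forall>y\<in>V. delete_edge adj u v x y \<longleftrightarrow> line_adj ends' (\<phi> x) (\<phi> y)"
  proof (intro ballI)
    fix x y assume xy: "x \<in> V" "y \<in> V"
    show "delete_edge adj u v x y \<longleftrightarrow> line_adj ends' (\<phi> x) (\<phi> y)"
    proof (cases "x = u \<or> y = u")
      case False
      then have "\<phi> x \<noteq> e" "\<phi> y \<noteq> e" using phie xy by auto
      then have "line_adj ends' (\<phi> x) (\<phi> y) = line_adj ends (\<phi> x) (\<phi> y)"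
        using eq unfolding line_adj_def by auto
      then show ?thesis using ad xy False unfolding delete_edge_def by (auto simp: doubleton_eq_iff)
    next
      case True
      then show ?thesis
      proof
        assume x: "x = u"
        show ?thesis
        proof (cases "y = v")
          case True then show ?thesis using x nuv uV unfolding delete_edge_def e_def f_def by auto
        next
          case False then show ?thesis using x key[OF xy(2)] uV unfolding delete_edge_def e_def
            by (auto simp: doubleton_eq_iff)
        qed
      next
        assume y: "y = u"
        show ?thesis
        proof (cases "x = v")
          case True then show ?thesis using y nuv uV lsym unfolding delete_edge_def e_def f_def by auto
        next
          case False then show ?thesis using y key[OF xy(1)] uV lsym asym unfolding delete_edge_def e_def
            by (auto simp: doubleton_eq_iff)
        qed
      qed
    qed
  qed
  have sg': "simple_graph V (delete_edge adj u v)"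
    using sg unfolding simple_graph_def delete_edge_def by (auto simp: insert_commute)
  show ?thesis unfolding line_graph_of_bipartite_multigraph_def
    using sg' bm' bij main by blast
qed


lemma add_ok_gen:
  fixes X Y Ed :: "nat set" and ends :: "nat \<Rightarrow> nat \<times> nat"
  assumes sg: "simple_graph V adj"
    and bm: "bipartite_multigraph X Y Ed ends" and bij: "bij_betw \<phi> V Ed"
    and ad: "\<forall>x\<in>V. \<forall>y\<in>V. adj x y \<longleftrightarrow> line_adj ends (\<phi> x) (\<phi> y)"
    and z: "z \<notin> V" and KV: "K \<subseteq> V"
    and pq: "p \<notin> Y" "q \<notin> X" "p \<noteq> q"
    and Kc: "\<forall>w\<in>V. w \<in> K \<longleftrightarrow> fst (ends (\<phi> w)) = p \<or> snd (ends (\<phi> w)) = q"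
  shows "line_graph_of_bipartite_multigraph (insert z V) (add_vertex_adj adj z K)"
proof -
  have finE: "finite Ed" and fin: "finite X" "finite Y" and disj: "X \<inter> Y = {}"
    and ends_in: "\<forall>g\<in>Ed. fst (ends g) \<in> X \<and> snd (ends g) \<in> Y"
    using bm unfolding bipartite_multigraph_def by auto
  define g where "g = Suc (Max Ed)"
  have gE: "g \<notin> Ed" using fresh1[OF finE] unfolding g_def .
  define ends' where "ends' = ends(g := (p, q))"
  define \<phi>' where "\<phi>' = \<phi>(z := g)"
  have bm': "bipartite_multigraph (insert p X) (insert q Y) (insert g Ed) ends'"
    using finE fin disj ends_in pq unfolding bipartite_multigraph_def ends'_def by auto
  have inj: "inj_on \<phi> V" and img: "\<phi> ` V = Ed" using bij unfolding bij_betw_def by auto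
  have phiEd: "\<And>w. w \<in> V \<Longrightarrow> \<phi> w \<in> Ed" using img by auto
  have bij': "bij_betw \<phi>' (insert z V) (insert g Ed)"
  proof -
    have e1: "\<And>w. w \<in> V \<Longrightarrow> \<phi>' w = \<phi> w" using z unfolding \<phi>'_def by auto
    have "bij_betw \<phi>' V Ed" using bij_betw_cong[of V \<phi>' \<phi> Ed] e1 bij by blast
    moreover have "\<phi>' z = g" unfolding \<phi>'_def by simp
    ultimately show ?thesis using z gE notIn_Un_bij_betw3[of z V \<phi>' Ed] by simp
  qed
  have eqp: "\<And>w. w \<in> V \<Longrightarrow> \<phi>' w = \<phi> w" using z unfolding \<phi>'_def by auto
  have eqe: "\<And>w. w \<in> V \<Longrightarrow> ends' (\<phi> w) = ends (\<phi> w)" using phiEd gE unfolding ends'_def by fastforce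
  have lsym: "\<And>a b. line_adj ends' a b = line_adj ends' b a" unfolding line_adj_def by (metis Int_commute)
  have zadj: "\<And>w. w \<in> V \<Longrightarrow> w \<in> K \<longleftrightarrow> line_adj ends' g (\<phi> w)"
  proof -
    fix w assume w: "w \<in> V"
    have "line_adj ends' g (\<phi> w) \<longleftrightarrow> g \<noteq> \<phi> w \<and> (fst (ends' g) = fst (ends' (\<phi> w)) \<or> snd (ends' g) = snd (ends' (\<phi> w)))"
      using la[OF bm'] phiEd[OF w] by blast
    then show "w \<in> K \<longleftrightarrow> line_adj ends' g (\<phi> w)"
      using Kc w eqe[OF w] phiEd[OF w] gE unfolding ends'_def by auto
  qed
  have zK: "z \<notin> K" using z KV by auto
  have nadjz: "\<And>w. \<not> adj z w" "\<And>w. \<not> adj w z" using sg z unfolding simple_graph_def by auto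
  have main: "\<forall>x\<in>insert z V. \<forall>y\<in>insert z V. add_vertex_adj adj z K x y \<longleftrightarrow> line_adj ends' (\<phi>' x) (\<phi>' y)"
  proof (intro ballI)
    fix x y assume xy: "x \<in> insert z V" "y \<in> insert z V"
    show "add_vertex_adj adj z K x y \<longleftrightarrow> line_adj ends' (\<phi>' x) (\<phi>' y)"
    proof (cases "x = z")
      case True
      show ?thesis
      proof (cases "y = z")
        case True then show ?thesis using \<open>x = z\<close> zK nadjz unfolding add_vertex_adj_def line_adj_def by auto
      next
        case False
        then have y: "y \<in> V" using xy by auto
        then show ?thesis using \<open>x = z\<close> False zadj[OF y] eqp[OF y] nadjz unfolding add_vertex_adj_def \<phi>'_def by auto
      qed
    next
      case False
      then have x: "x \<in> V" using xy by auto
      show ?thesis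
      proof (cases "y = z")
        case True then show ?thesis using \<open>x \<noteq> z\<close> zadj[OF x] eqp[OF x] nadjz lsym unfolding add_vertex_adj_def \<phi>'_def by auto
      next
        case False
        then have y: "y \<in> V" using xy by auto
        have "line_adj ends' (\<phi> x) (\<phi> y) = line_adj ends (\<phi> x) (\<phi> y)"
          using eqe[OF x] eqe[OF y] unfolding line_adj_def by simp
        then show ?thesis using x y \<open>x \<noteq> z\<close> False ad eqp[OF x] eqp[OF y] unfolding add_vertex_adj_def by auto
      qed
    qed
  qed
  have sg': "simple_graph (insert z V) (add_vertex_adj adj z K)"
    using sg KV zK unfolding simple_graph_def add_vertex_adj_def by auto
  show ?thesis unfolding line_graph_of_bipartite_multigraph_def
    using sg' bm' bij' main by blast
qed


lemma add_ok:
  assumes lg: "line_graph_of_bipartite_multigraph V adj"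
    and z: "z \<notin> V" and mc: "maximal_clique V adj K"
  shows "line_graph_of_bipartite_multigraph (insert z V) (add_vertex_adj adj z K)"
proof -
  have sg: "simple_graph V adj" using lg unfolding line_graph_of_bipartite_multigraph_def by blast
  obtain X Y :: "nat set" and Ed :: "nat set" and ends \<phi> where
    bm: "bipartite_multigraph X Y Ed ends" and bij: "bij_betw \<phi> V Ed"
    and ad: "\<forall>x\<in>V. \<forall>y\<in>V. adj x y \<longleftrightarrow> line_adj ends (\<phi> x) (\<phi> y)"
    using lg unfolding line_graph_of_bipartite_multigraph_def by blast
  have fin: "finite X" "finite Y" and disj: "X \<inter> Y = {}"
    and ends_in: "\<forall>g\<in>Ed. fst (ends g) \<in> X \<and> snd (ends g) \<in> Y"
    using bm unfolding bipartite_multigraph_def by auto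
  define a where "a = Suc (Max (X \<union> Y))"
  define b where "b = Suc (Suc (Max (X \<union> Y)))"
  have ab: "a \<notin> X" "a \<notin> Y" "b \<notin> X" "b \<notin> Y" "a \<noteq> b"
    using fresh1[of "X \<union> Y"] fresh2[of "X \<union> Y"] fin unfolding a_def b_def by auto
  have cl: "clique V adj K" and mx: "\<And>K'. clique V adj K' \<Longrightarrow> K \<subseteq> K' \<Longrightarrow> K' = K"
    using mc unfolding maximal_clique_def by auto
  have KV: "K \<subseteq> V" and Kadj: "\<And>x y. x \<in> K \<Longrightarrow> y \<in> K \<Longrightarrow> x \<noteq> y \<Longrightarrow> adj x y"
    using cl unfolding clique_def by auto
  have inj: "inj_on \<phi> V" and img: "\<phi> ` V = Ed" using bij unfolding bij_betw_def by auto
  have phiEd: "\<And>w. w \<in> V \<Longrightarrow> \<phi> w \<in> Ed" using img by auto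
  have adjc: "\<And>x y. x \<in> V \<Longrightarrow> y \<in> V \<Longrightarrow> adj x y \<longleftrightarrow> x \<noteq> y \<and>
      (fst (ends (\<phi> x)) = fst (ends (\<phi> y)) \<or> snd (ends (\<phi> x)) = snd (ends (\<phi> y)))"
  proof -
    fix x y assume xy: "x \<in> V" "y \<in> V"
    have "\<phi> x = \<phi> y \<longleftrightarrow> x = y" using inj xy unfolding inj_on_def by blast
    then show "adj x y \<longleftrightarrow> x \<noteq> y \<and>
      (fst (ends (\<phi> x)) = fst (ends (\<phi> y)) \<or> snd (ends (\<phi> x)) = snd (ends (\<phi> y)))"
    proof -
      have "adj x y \<longleftrightarrow> line_adj ends (\<phi> x) (\<phi> y)" using ad xy by blast
      moreover note la[OF bm phiEd[OF xy(1)] phiEd[OF xy(2)]]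
      ultimately show ?thesis using \<open>\<phi> x = \<phi> y \<longleftrightarrow> x = y\<close> by simp
    qed
  qed
  show ?thesis
  proof (cases "K = {}")
    case True
    show ?thesis
      by (rule add_ok_gen[OF sg bm bij ad z KV, of a b])
         (use ab True phiEd ends_in in auto)
  next
    case False
    then obtain u where u: "u \<in> K" by blast
    have uV: "u \<in> V" using u KV by auto
    define x1 where "x1 = fst (ends (\<phi> u))"
    define y1 where "y1 = snd (ends (\<phi> u))"
    have side: "(\<forall>w\<in>K. fst (ends (\<phi> w)) = x1) \<or> (\<forall>w\<in>K. snd (ends (\<phi> w)) = y1)"
    proof (rule ccontr)
      assume "\<not> ?thesis"
      then obtain w1 w2 where w1: "w1 \<in> K" "fst (ends (\<phi> w1)) \<noteq> x1"
        and w2: "w2 \<in> K" "snd (ends (\<phi> w2)) \<noteq> y1" by blast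
      have V12: "w1 \<in> V" "w2 \<in> V" using w1 w2 KV by auto
      have "w1 \<noteq> u" using w1 x1_def by auto
      then have "adj u w1" using Kadj u w1 by auto
      then have s1: "snd (ends (\<phi> w1)) = y1" using adjc[OF uV V12(1)] w1 x1_def y1_def by auto
      have "w2 \<noteq> u" using w2 y1_def by auto
      then have "adj u w2" using Kadj u w2 by auto
      then have f2: "fst (ends (\<phi> w2)) = x1" using adjc[OF uV V12(2)] w2 x1_def y1_def by auto
      have "w1 \<noteq> w2" using w1 f2 by auto
      then have "adj w1 w2" using Kadj w1 w2 by auto
      then show False using adjc[OF V12] w1 w2 s1 f2 by auto
    qed
    then show ?thesis
    proof
      assume allx: "\<forall>w\<in>K. fst (ends (\<phi> w)) = x1"
      have x1X: "x1 \<in> X" using ends_in phiEd[OF uV] x1_def by auto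
      have Kc: "\<forall>w\<in>V. w \<in> K \<longleftrightarrow> fst (ends (\<phi> w)) = x1 \<or> snd (ends (\<phi> w)) = b"
      proof
        fix w assume w: "w \<in> V"
        have nb: "snd (ends (\<phi> w)) \<noteq> b" using ends_in phiEd[OF w] ab by auto
        have "fst (ends (\<phi> w)) = x1 \<Longrightarrow> w \<in> K"
        proof -
          assume fw: "fst (ends (\<phi> w)) = x1"
          have "clique V adj (insert w K)" unfolding clique_def
          proof (intro conjI ballI impI)
            show "insert w K \<subseteq> V" using w KV by auto
          next
            fix p q assume pq: "p \<in> insert w K" "q \<in> insert w K" "p \<noteq> q"
            have pV: "p \<in> V" "q \<in> V" using pq w KV by auto
            have "fst (ends (\<phi> p)) = x1" "fst (ends (\<phi> q)) = x1" using pq allx fw by auto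
            then show "adj p q" using adjc[OF pV] pq by auto
          qed
          then have "insert w K = K" using mx by blast
          then show "w \<in> K" by blast
        qed
        then show "w \<in> K \<longleftrightarrow> fst (ends (\<phi> w)) = x1 \<or> snd (ends (\<phi> w)) = b"
          using allx nb by auto
      qed
      show ?thesis
        by (rule add_ok_gen[OF sg bm bij ad z KV _ _ _ Kc]) (use x1X ab disj in auto)
    next
      assume ally: "\<forall>w\<in>K. snd (ends (\<phi> w)) = y1"
      have y1Y: "y1 \<in> Y" using ends_in phiEd[OF uV] y1_def by auto
      have Kc: "\<forall>w\<in>V. w \<in> K \<longleftrightarrow> fst (ends (\<phi> w)) = a \<or> snd (ends (\<phi> w)) = y1"
      proof
        fix w assume w: "w \<in> V"
        have na: "fst (ends (\<phi> w)) \<noteq> a" using ends_in phiEd[OF w] ab by auto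
        have "snd (ends (\<phi> w)) = y1 \<Longrightarrow> w \<in> K"
        proof -
          assume fw: "snd (ends (\<phi> w)) = y1"
          have "clique V adj (insert w K)" unfolding clique_def
          proof (intro conjI ballI impI)
            show "insert w K \<subseteq> V" using w KV by auto
          next
            fix p q assume pq: "p \<in> insert w K" "q \<in> insert w K" "p \<noteq> q"
            have pV: "p \<in> V" "q \<in> V" using pq w KV by auto
            have "snd (ends (\<phi> p)) = y1" "snd (ends (\<phi> q)) = y1" using pq ally fw by auto
            then show "adj p q" using adjc[OF pV] pq by auto
          qed
          then have "insert w K = K" using mx by blast
          then show "w \<in> K" by blast
        qed
        then show "w \<in> K \<longleftrightarrow> fst (ends (\<phi> w)) = a \<or> snd (ends (\<phi> w)) = y1"
          using ally na by auto
      qed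
      show ?thesis
        by (rule add_ok_gen[OF sg bm bij ad z KV _ _ _ Kc]) (use y1Y ab disj in auto)
    qed
  qed
qed

theorem lemma5:
  fixes V :: "'a set" and adj :: "'a \<Rightarrow> 'a \<Rightarrow> bool"
  assumes "line_graph_of_bipartite_multigraph V adj"
  shows "(\<forall>u v. flat_edge V adj u v \<longrightarrow>
            line_graph_of_bipartite_multigraph V (delete_edge adj u v))
       \<and> (\<forall>z K. z \<notin> V \<and> maximal_clique V adj K \<longrightarrow>
            line_graph_of_bipartite_multigraph (insert z V) (add_vertex_adj adj z K))"
  using delete_ok[OF assms] add_ok[OF assms] by blast

end
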